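(* Let $B>0$ and let $a_0,\dots,a_T\in[0,B]$ with $a_0>0$. Then $$\sum_{t=1}^{T}\frac{a_t}{\sum_{\tau=0}^{t-1}a_\tau}\le\log_2\!\left(\frac{\sum_{t=0}^{T-1}a_t}{a_0}\right)+1+\frac{2B}{a_0}.$$ *)

theory Defs
  imports Complex_Main
begin

end

theory Submission
  imports Defs "HOL-Analysis.Convex"
begin

lemma two_pow_le: fixes u :: real assumes "0 \<le> u" "u \<le> 1"
  shows "u \<le> log 2 (1 + u)"
proof -
  have "exp ((1 - u) * 0 + u * ln 2) \<le> (1 - u) * exp 0 + u * exp (ln 2)"
    using convex_onD[OF exp_convex, of u 0 "ln 2"] assms by simp
  hence "exp (u * ln 2) \<le> 1 + u" by simp
  hence "ln (exp (u * ln 2)) \<le> ln (1 + u)" using assms by (subst ln_le_cancel_iff) auto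
  hence "u * ln 2 \<le> ln (1 + u)" by simp
  thus ?thesis unfolding log_def by (simp add: pos_le_divide_eq)
qed

lemma step:
  fixes s x B :: real assumes "s > 0" "0 \<le> x" "x \<le> B"
  shows "x / s \<le> log 2 ((s + x) / s) + 2*B/s - 2*B/(s+x)"
    and "x / s \<le> 1 + 2*B/s - 2*B/(s+x)"
proof -
  have B0: "B \<ge> 0" using assms by simp
  have d: "2*B/(s+x) \<le> 2*B/s" using assms B0 by (intro divide_left_mono) auto
  have lg: "log 2 ((s + x) / s) \<ge> 0" using assms by simp
  have "x / s \<le> log 2 ((s + x) / s) + 2*B/s - 2*B/(s+x) \<and> x / s \<le> 1 + 2*B/s - 2*B/(s+x)"
  proof (cases "x \<le> s")
    case True
    have "x/s \<le> log 2 (1 + x/s)" using two_pow_le[of "x/s"] True assms by simp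
    moreover have "1 + x/s = (s+x)/s" using assms by (simp add: field_simps)
    moreover have "x/s \<le> 1" using True assms by simp
    ultimately show ?thesis using d by simp
  next
    case False
    have "x/s \<le> B/s" using assms by (simp add: divide_right_mono)
    moreover have "2*B/(s+x) \<le> B/s" using False assms B0
      by (simp add: field_simps)
    ultimately show ?thesis using lg by simp
  qed
  thus "x / s \<le> log 2 ((s + x) / s) + 2*B/s - 2*B/(s+x)"
    and "x / s \<le> 1 + 2*B/s - 2*B/(s+x)" by auto
qed

theorem lemmaB1:
  fixes a :: "nat \<Rightarrow> real" and B :: real and T :: nat
  assumes "B > 0"
    and "\<And>t. t \<le> T \<Longrightarrow> 0 \<le> a t \<and> a t \<le> B"
    and "a 0 > 0"
  shows "(\<Sum>t=1..T. a t / (\<Sum>\<tau><t. a \<tau>))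
           \<le> log 2 ((\<Sum>t<T. a t) / a 0) + 1 + 2 * B / a 0"
proof -
  define S where "S n = (\<Sum>\<tau><n. a \<tau>)" for n
  have Spos: "S n \<ge> a 0" if "1 \<le> n" "n \<le> T + 1" for n
    using that
  proof (induction n)
    case 0 then show ?case by simp
  next
    case (Suc n)
    show ?case
    proof (cases "n = 0")
      case True then show ?thesis by (simp add: S_def)
    next
      case False
      then have "S n \<ge> a 0" using Suc by simp
      moreover have "a n \<ge> 0" using Suc assms(2)[of n] by simp
      ultimately show ?thesis by (simp add: S_def)
    qed
  qed
  have S1: "S 1 = a 0" by (simp add: S_def)
  have SS: "S (Suc n) = S n + a n" for n by (simp add: S_def)
  have main: "(\<Sum>t=1..n. a t / S t) \<le> log 2 (S (n+1) / a 0) + 2*B/a 0 - 2*B/S (n+1)"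
    if "n \<le> T" for n
    using that
  proof (induction n)
    case 0 then show ?case using S1 assms(3) by simp
  next
    case (Suc n)
    have p: "S (Suc n) > 0" using Spos[of "Suc n"] Suc assms(3) by simp
    have p2: "S (n+1) > 0" using Spos[of "n+1"] Suc assms(3) by simp
    have st: "a (Suc n) / S (Suc n) \<le> log 2 ((S (Suc n) + a (Suc n)) / S (Suc n))
       + 2*B/S (Suc n) - 2*B/(S (Suc n) + a (Suc n))"
      using step(1)[OF p, of "a (Suc n)" B] assms(2)[of "Suc n"] Suc by simp
    have "log 2 ((S (Suc n) + a (Suc n)) / S (Suc n)) = log 2 (S (Suc n + 1)) - log 2 (S (Suc n))"
      using p assms(2)[of "Suc n"] Suc SS by (simp add: log_divide)
    moreover have "log 2 (S (Suc n) / a 0) = log 2 (S (Suc n)) - log 2 (a 0)"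
      using p assms(3) by (simp add: log_divide)
    moreover have "log 2 (S (Suc n + 1) / a 0) = log 2 (S (Suc n + 1)) - log 2 (a 0)"
      using p assms(3) assms(2)[of "Suc n"] Suc SS by (simp add: log_divide add_pos_nonneg)
    moreover have "(\<Sum>t=1..Suc n. a t / S t) = (\<Sum>t=1..n. a t / S t) + a (Suc n) / S (Suc n)"
      by simp
    ultimately show ?case using Suc st SS[of "Suc n"] by simp
  qed
  show ?thesis
  proof (cases T)
    case 0
    then show ?thesis using assms by (simp add: log_def)
  next
    case (Suc m)
    have p: "S (Suc m) > 0" using Spos[of "Suc m"] Suc assms(3) by simp
    have m: "(\<Sum>t=1..m. a t / S t) \<le> log 2 (S (m+1) / a 0) + 2*B/a 0 - 2*B/S (m+1)"
      using main[of m] Suc by simp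
    have st: "a (Suc m) / S (Suc m) \<le> 1 + 2*B/S (Suc m) - 2*B/(S (Suc m) + a (Suc m))"
      using step(2)[OF p, of "a (Suc m)" B] assms(2)[of "Suc m"] Suc by simp
    have q: "2*B/(S (Suc m) + a (Suc m)) \<ge> 0"
      using p assms(1) assms(2)[of "Suc m"] Suc by simp
    have "(\<Sum>t=1..T. a t / S t) = (\<Sum>t=1..m. a t / S t) + a (Suc m) / S (Suc m)"
      using Suc by simp
    also have "\<dots> \<le> log 2 (S T / a 0) + 1 + 2 * B / a 0"
      using m st q Suc by simp
    finally show ?thesis by (simp add: S_def)
  qed
qed

end
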